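(* With $D_1(y)=y(y+\lambda_2)(y+2\lambda_1+\lambda_2)$, the Laplace transform $\widehat{\boldsymbol\nu}_1$ (extended analytically to a neighbourhood of the closure of $\mathcal D_2$) satisfies $$\frac{\widehat{\boldsymbol\nu}_1(\overline y)}{D_1(\overline y)}=\frac{\widehat{\boldsymbol\nu}_1(y)}{D_1(y)}\qquad\text{for all }y\in\mathcal P_2.$$
   Context: Standing setting. Let $\delta_1<\delta_2<\delta_3$ be real numbers and set $\lambda_1:=2(\delta_2-\delta_1)>0$, $\lambda_2:=2(\delta_3-\delta_2)>0$. Let $(G(\cdot),H(\cdot))$ be the process of gaps of the degenerate rank-based three-particle system, i.e. the continuous process in $[0,\infty)^2$ solving $G(t)=G(0)-\tfrac{\lambda_1}{2}t-W(t)-\tfrac12L^H(t)+L^G(t)$, $H(t)=H(0)-\tfrac{\lambda_2}{2}t+W(t)-\tfrac12L^G(t)+L^H(t)$, $t\ge0$, where $W$ is a standard scalar Brownian motion and $L^Z(\cdot)=\int_0^\cdot\mathbf 1_{\{Z(t)=0\}}\,dZ(t)$ is the local time at $0$ of a continuous semimartingale $Z\ge0$. This process is positive recurrent with a unique invariant probability measure $\boldsymbol\pi$, which satisfies $\boldsymbol\pi((0,\infty)^2)=1$. Write $\widehat{\boldsymbol\pi}(x,y)=\iint_{(0,\infty)^2}e^{-xg-yh}\boldsymbol\pi(dg,dh)$. The lateral measures are $\boldsymbol\nu_1(A)=\mathbb E^{\boldsymbol\pi}\int_0^2\mathbf 1_A(H(t))\,dL^G(t)$ and $\boldsymbol\nu_2(A)=\mathbb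 E^{\boldsymbol\pi}\int_0^2\mathbf 1_A(G(t))\,dL^H(t)$ for Borel $A\subset(0,\infty)$, with Laplace transforms $\widehat{\boldsymbol\nu}_1(y)=\int_0^\infty e^{-yu}\boldsymbol\nu_1(du)=\lim_{x\to\infty}x\widehat{\boldsymbol\pi}(x,y)$ and $\widehat{\boldsymbol\nu}_2(x)=\lim_{y\to\infty}y\widehat{\boldsymbol\pi}(x,y)$. They satisfy the basic adjoint relationship (BAR) $$[(x-y)^2+\lambda_1x+\lambda_2y]\,\widehat{\boldsymbol\pi}(x,y)=\big(x-\tfrac y2\big)\widehat{\boldsymbol\nu}_1(y)+\big(y-\tfrac x2\big)\widehat{\boldsymbol\nu}_2(x),\qquad(x,y)\in[0,\infty)^2,$$ and conversely a probability measure on $(0,\infty)^2$ which, together with two finite measures on $(0,\infty)$, satisfies the BAR is the invariant measure. $\mathcal P_2:=\{y\in\mathbb C:(\Im y)^2=(\lambda_1+\lambda_2)\Re y+\frac14\lambda_2(2\lambda_1+\lambda_2)\}$ and $\mathcal D_2$ is the open domain inside it ($<$ instead of $=$); $\widehat{\boldsymbol\nu}_1$ extends analytically to an open set containing $\mathcal D_2\cup\mathcal P_2$. *)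

theory Defs
  imports "HOL-Probability.Probability" "HOL-Complex_Analysis.Complex_Analysis"
begin

definition laplace2 :: "(real \<times> real) measure \<Rightarrow> real \<Rightarrow> real \<Rightarrow> real" where
  "laplace2 \<pi> x y = (\<integral>p. exp (- x * fst p - y * snd p) \<partial>\<pi>)"

definition laplace1 :: "real measure \<Rightarrow> real \<Rightarrow> real" where
  "laplace1 \<nu> y = (\<integral>u. exp (- y * u) \<partial>\<nu>)"

definition claplace1 :: "real measure \<Rightarrow> complex \<Rightarrow> complex" where
  "claplace1 \<nu> y = (\<integral>u. exp (- y * complex_of_real u) \<partial>\<nu>)"

definition P2 :: "real \<Rightarrow> real \<Rightarrow> complex set" where
  "P2 l1 l2 = {y. (Im y)^2 = (l1 + l2) * Re y + l2 * (2 * l1 + l2) / 4}"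

definition D2 :: "real \<Rightarrow> real \<Rightarrow> complex set" where
  "D2 l1 l2 = {y. (Im y)^2 < (l1 + l2) * Re y + l2 * (2 * l1 + l2) / 4}"

definition Dpoly1 :: "real \<Rightarrow> real \<Rightarrow> complex \<Rightarrow> complex" where
  "Dpoly1 l1 l2 y = y * (y + of_real l2) * (y + of_real (2 * l1 + l2))"

end

theory Submission
  imports Defs
begin
lemma norm_exp_sub2:
  fixes z :: complex
  shows "norm (exp z - 1 - z) \<le> norm z ^ 2 * exp (norm z)"
proof -
  have sums: "(\<lambda>k. z ^ (k + 2) / fact (k + 2)) sums (exp z - (\<Sum>k<2. z ^ k / fact k))"
    using exp_converges[of z] by (intro sums_split_initial_segment) (simp add: scaleR_conv_of_real divide_simps)
  have summ: "summable (\<lambda>k. norm z ^ k / fact k)"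
    using exp_converges[of "norm z"] by (simp add: sums_iff divide_simps)
  have summ2: "summable (\<lambda>k. norm z ^ k / fact (k + 2))"
    apply (rule summable_comparison_test[OF _ summ])
    apply (auto intro!: exI[of _ 0] divide_left_mono fact_mono)
    subgoal for n using mult_mono[of 1 "2+real n" 1 "1+real n"] by simp
    done
  have eqk: "\<And>k. norm (z ^ (k + 2) / fact (k + 2)) = norm z ^ 2 * (norm z ^ k / fact (k + 2))"
    by (simp only: norm_divide norm_power norm_fact power_add) (simp add: mult_ac norm_mult norm_power)
  have "exp z - 1 - z = (\<Sum>k. z ^ (k + 2) / fact (k + 2))"
    using sums by (simp add: sums_iff eval_nat_numeral)
  also have "norm \<dots> \<le> (\<Sum>k. norm (z ^ (k + 2) / fact (k + 2)))"
  proof (rule summable_norm)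
    show "summable (\<lambda>k. norm (z ^ (k + 2) / fact (k + 2)))"
      unfolding eqk using summable_mult[OF summ2, of "norm z ^ 2"] .
  qed
  also have "\<dots> = (\<Sum>k. norm z ^ 2 * (norm z ^ k / fact (k + 2)))"
    unfolding eqk ..
  also have "\<dots> = norm z ^ 2 * (\<Sum>k. norm z ^ k / fact (k + 2))"
    using summ2 by (rule suminf_mult)
  also have "\<dots> \<le> norm z ^ 2 * (\<Sum>k. norm z ^ k / fact k)"
    apply (intro mult_left_mono suminf_le summ2 summ)
    apply (auto intro!: divide_left_mono fact_mono)
    subgoal for n using mult_mono[of 1 "2+real n" 1 "1+real n"] by simp
    done
  also have "(\<Sum>k. norm z ^ k / fact k) = exp (norm z)"
    using exp_converges[of "norm z"] by (simp add: sums_iff divide_simps)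
  finally show ?thesis .
qed

lemma aux_uexp:
  fixes c U :: real assumes "c > 0" "U \<ge> 0"
  shows "U * exp (- (c * U / 4)) \<le> 4 / c"
proof -
  have "c * U / 4 \<le> exp (c * U / 4)"
    using exp_ge_add_one_self[of "c * U / 4"] by linarith
  hence "U \<le> 4 / c * exp (c * U / 4)" using assms by (simp add: field_simps)
  hence "U * exp (- (c * U / 4)) \<le> 4 / c * exp (c * U / 4) * exp (- (c * U / 4))"
    by (intro mult_right_mono) auto
  also have "\<dots> = 4 / c" by (simp add: exp_minus field_simps)
  finally show ?thesis .
qed

lemma aux_u2exp:
  fixes c U :: real assumes "c > 0" "U \<ge> 0"
  shows "U^2 * exp (- (c * U / 2)) \<le> 16 / c^2"
proof -
  have "U^2 * exp (- (c * U / 2)) = (U * exp (- (c * U / 4)))^2"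
    by (simp add: power2_eq_square exp_add[symmetric])
  also have "\<dots> \<le> (4/c)^2"
    using aux_uexp[OF assms] assms by (intro power_mono) auto
  finally show ?thesis by (simp add: power_divide)
qed

lemma norm_integral_le_const:
  fixes g :: "'a \<Rightarrow> complex"
  assumes "finite_measure M" "g \<in> borel_measurable M" "AE p in M. norm (g p) \<le> B"
  shows "norm (\<integral>p. g p \<partial>M) \<le> B * measure M (space M)"
proof -
  interpret finite_measure M by fact
  have int: "integrable M g" by (rule integrable_const_bound[OF assms(3,2)])
  have "norm (\<integral>p. g p \<partial>M) \<le> (\<integral>p. norm (g p) \<partial>M)" by (rule integral_norm_bound)
  also have "\<dots> \<le> (\<integral>p. B \<partial>M)"
    by (intro integral_mono_AE integrable_norm int assms(3)) auto
  also have "\<dots> = B * measure M (space M)" by (simp add: mult.commute)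
  finally show ?thesis .
qed

lemma laplace_holo:
  fixes M :: "'a measure" and a :: "'a \<Rightarrow> complex" and u :: "'a \<Rightarrow> real"
  assumes fin: "finite_measure M" and am: "a \<in> borel_measurable M" and um: "u \<in> borel_measurable M"
    and ab: "AE p in M. norm (a p) \<le> 1" and up: "AE p in M. 0 \<le> u p"
  shows "(\<lambda>y. \<integral>p. a p * exp (- y * of_real (u p)) \<partial>M) holomorphic_on {y. 0 < Re y}"
proof -
  interpret finite_measure M by fact
  note [measurable] = am um
  define F where "F = (\<lambda>y. \<integral>p. a p * exp (- y * of_real (u p)) \<partial>M)"
  have meas: "\<And>y. (\<lambda>p. a p * exp (- y * of_real (u p))) \<in> borel_measurable M" by measurable
  have meas2: "\<And>y. (\<lambda>p. a p * (- of_real (u p)) * exp (- y * of_real (u p))) \<in> borel_measurable M"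
    by measurable
  have intF: "integrable M (\<lambda>p. a p * exp (- y * of_real (u p)))" if "Re y \<ge> 0" for y
  proof (rule integrable_const_bound[where B=1, OF _ meas])
    show "AE p in M. norm (a p * exp (- y * of_real (u p))) \<le> 1"
      using ab up
    proof eventually_elim
      case (elim p)
      have "exp (- (Re y * u p)) \<le> 1" using that elim by (simp add: mult_nonneg_nonneg)
      thus ?case using elim by (simp add: norm_mult norm_exp_eq_Re mult_le_one)
    qed
  qed
  have "\<exists>f'. DERIV F y0 :> f'" if y0: "0 < Re y0" for y0
  proof -
    define c where "c = Re y0"
    have c: "c > 0" using y0 c_def by simp
    define Dv where "Dv = (\<integral>p. a p * (- of_real (u p)) * exp (- y0 * of_real (u p)) \<partial>M)"
    have intD: "integrable M (\<lambda>p. a p * (- of_real (u p)) * exp (- y0 * of_real (u p)))"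
    proof (rule integrable_const_bound[where B="4/c", OF _ meas2])
      show "AE p in M. norm (a p * (- of_real (u p)) * exp (- y0 * of_real (u p))) \<le> 4/c"
        using ab up
      proof eventually_elim
        case (elim p)
        have "exp (- (c * u p)) \<le> exp (- (c * u p / 4))" using c elim by simp
        hence "u p * exp (- (c * u p)) \<le> u p * exp (- (c * u p / 4))"
          using elim by (intro mult_left_mono) auto
        also have "\<dots> \<le> 4 / c" by (rule aux_uexp[OF c elim(2)])
        finally have "u p * exp (- (c * u p)) \<le> 4 / c" .
        moreover have "norm (a p * (- of_real (u p)) * exp (- y0 * of_real (u p)))
            = norm (a p) * (u p * exp (- (c * u p)))"
          using elim by (simp add: norm_mult norm_exp_eq_Re c_def)
        moreover have "norm (a p) * (u p * exp (- (c * u p))) \<le> 1 * (u p * exp (- (c * u p)))"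
          using elim by (intro mult_right_mono) auto
        ultimately show ?case by simp
      qed
    qed
    define K where "K = 16 / c^2 * measure M (space M)"
    have key: "norm ((F (y0 + h) - F y0) / h - Dv) \<le> norm h * K"
      if h: "h \<noteq> 0" "norm h < c / 2" for h
    proof -
      have Reh: "Re (y0 + h) \<ge> 0" using h abs_Re_le_cmod[of h] c_def c by auto
      have "F (y0 + h) - F y0 - h * Dv = (\<integral>p. a p * exp (- (y0 + h) * of_real (u p))
          - a p * exp (- y0 * of_real (u p))
          - h * (a p * (- of_real (u p)) * exp (- y0 * of_real (u p))) \<partial>M)"
        unfolding F_def Dv_def
        using intF[OF Reh] intF[of y0] y0 intD
        by (simp add: integral_diff)
      also have "norm \<dots> \<le> (norm h ^ 2 * (16 / c^2)) * measure M (space M)"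
      proof (rule norm_integral_le_const[OF fin])
        show "(\<lambda>p. a p * exp (- (y0 + h) * of_real (u p)) - a p * exp (- y0 * of_real (u p))
          - h * (a p * (- of_real (u p)) * exp (- y0 * of_real (u p)))) \<in> borel_measurable M"
          by measurable
        show "AE p in M. norm (a p * exp (- (y0 + h) * of_real (u p)) - a p * exp (- y0 * of_real (u p))
          - h * (a p * (- of_real (u p)) * exp (- y0 * of_real (u p)))) \<le> norm h ^ 2 * (16 / c^2)"
          using ab up
        proof eventually_elim
          case (elim p)
          define U where "U = u p"
          have U: "U \<ge> 0" using elim U_def by simp
          define z where "z = - h * of_real U"
          have eq: "a p * exp (- (y0 + h) * of_real (u p)) - a p * exp (- y0 * of_real (u p))
            - h * (a p * (- of_real (u p)) * exp (- y0 * of_real (u p)))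
            = a p * exp (- y0 * of_real U) * (exp z - 1 - z)"
          proof -
            have "exp (- (y0 + h) * of_real U) = exp (- y0 * of_real U) * exp z"
              unfolding z_def by (simp add: exp_add[symmetric] algebra_simps)
            thus ?thesis by (simp add: algebra_simps z_def U_def)
          qed
          have nz: "norm z = norm h * U" using U by (simp add: z_def norm_mult)
          have "norm (a p * exp (- y0 * of_real U) * (exp z - 1 - z))
              = norm (a p) * exp (- (c * U)) * norm (exp z - 1 - z)"
            by (simp add: norm_mult norm_exp_eq_Re c_def)
          also have "\<dots> \<le> 1 * exp (- (c * U)) * (norm z ^ 2 * exp (norm z))"
            using elim by (intro mult_mono norm_exp_sub2) auto
          also have "\<dots> = norm h ^ 2 * (U^2 * (exp (- (c * U)) * exp (norm h * U)))"
            by (simp add: nz power_mult_distrib)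
          also have "exp (- (c * U)) * exp (norm h * U) \<le> exp (- (c * U / 2))"
          proof -
            have "norm h * U \<le> c / 2 * U" using h U by (intro mult_right_mono) auto
            thus ?thesis by (simp add: exp_add[symmetric])
          qed
          hence "norm h ^ 2 * (U^2 * (exp (- (c * U)) * exp (norm h * U)))
              \<le> norm h ^ 2 * (U^2 * exp (- (c * U / 2)))"
            by (intro mult_left_mono) auto
          also have "\<dots> \<le> norm h ^ 2 * (16 / c^2)"
            by (intro mult_left_mono aux_u2exp c U) auto
          finally show ?case unfolding eq .
        qed
      qed
      finally have *: "norm (F (y0 + h) - F y0 - h * Dv) \<le> norm h ^ 2 * K"
        unfolding K_def by (simp add: mult_ac)
      have "(F (y0 + h) - F y0) / h - Dv = (F (y0 + h) - F y0 - h * Dv) / h"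
        using h by (simp add: field_simps)
      hence "norm ((F (y0 + h) - F y0) / h - Dv) = norm (F (y0 + h) - F y0 - h * Dv) / norm h"
        by (simp add: norm_divide)
      also have "\<dots> \<le> norm h ^ 2 * K / norm h"
        using * h by (intro divide_right_mono) auto
      also have "\<dots> = norm h * K" using h by (simp add: power2_eq_square)
      finally show ?thesis .
    qed
    have "((\<lambda>h. (F (y0 + h) - F y0) / h - Dv) \<longlongrightarrow> 0) (at 0)"
    proof (rule Lim_null_comparison)
      show "\<forall>\<^sub>F h in at 0. norm ((F (y0 + h) - F y0) / h - Dv) \<le> norm h * K"
        unfolding eventually_at using c
        by (intro exI[of _ "c/2"]) (auto intro!: key)
      show "((\<lambda>h. norm h * K) \<longlongrightarrow> 0) (at (0::complex))"
        by (auto intro!: tendsto_eq_intros)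
    qed
    hence "DERIV F y0 :> Dv" unfolding DERIV_def by (rule LIM_zero_cancel)
    thus ?thesis by blast
  qed
  thus ?thesis unfolding F_def[symmetric]
    by (subst holomorphic_on_open) (auto simp: open_halfspace_Re_gt)
qed

lemma islimpt_ray:
  fixes a c :: real assumes "a < c"
  shows "complex_of_real c islimpt (of_real ` {a<..})"
  unfolding islimpt_approachable
proof (intro allI impI)
  fix e :: real assume e: "e > 0"
  show "\<exists>x'\<in>of_real ` {a<..}. x' \<noteq> complex_of_real c \<and> dist x' (complex_of_real c) < e"
  proof (intro bexI[of _ "complex_of_real (c + min (e/2) 1)"] conjI)
    show "complex_of_real (c + min (e/2) 1) \<in> of_real ` {a<..}"
      using assms e by (intro imageI) auto
    show "complex_of_real (c + min (e/2) 1) \<noteq> complex_of_real c"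
      using e by (simp add: of_real_eq_iff)
    have "dist (complex_of_real (c + min (e/2) 1)) (complex_of_real c) = min (e/2) 1"
      using e by (simp add: dist_norm flip: of_real_diff)
    thus "dist (complex_of_real (c + min (e/2) 1)) (complex_of_real c) < e" using e by linarith
  qed
qed

lemma Dpoly1_nz:
  assumes l1: "l1 > 0" and l2: "l2 > 0" and y: "y \<in> P2 l1 l2"
  shows "Dpoly1 l1 l2 y \<noteq> 0"
proof
  assume "Dpoly1 l1 l2 y = 0"
  hence "y = 0 \<or> y = - of_real l2 \<or> y = - of_real (2*l1+l2)"
    unfolding Dpoly1_def mult_eq_0_iff add_eq_0_iff2 by blast
  moreover have P: "(Im y)^2 = (l1 + l2) * Re y + l2 * (2 * l1 + l2) / 4"
    using y by (simp add: P2_def)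
  ultimately show False
  proof (elim disjE)
    assume "y = 0" with P l1 l2 show False by (simp add: mult_pos_pos)
  next
    assume "y = - of_real l2"
    with P have "0 = (l1 + l2) * (- l2) + l2 * (2 * l1 + l2) / 4" by simp
    hence "0 = l2 * (- 2*l1 - 3 * l2)" by (simp add: algebra_simps)
    moreover have "l2 * (- 2*l1 - 3 * l2) < 0" using l1 l2 by (intro mult_pos_neg) auto
    ultimately show False by linarith
  next
    assume "y = - of_real (2*l1+l2)"
    with P have "0 = (l1 + l2) * (- (2*l1+l2)) + l2 * (2 * l1 + l2) / 4" by simp
    hence "0 = (2*l1+l2) * (- 4*l1 - 3 * l2)" by (simp add: algebra_simps)
    moreover have "(2*l1+l2) * (- 4*l1 - 3 * l2) < 0" using l1 l2 by (intro mult_pos_neg) auto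
    ultimately show False by linarith
  qed
qed

lemma W_identity:
  fixes X Y Z l1 l2 :: complex
  assumes "Y + Z = 2 * X - l2" "Y * Z = X^2 + l1 * X"
  shows "Y * (Y + l2) * (Y + (2*l1 + l2)) * (X - Y/2) * (Z - X/2)
       = Z * (Z + l2) * (Z + (2*l1 + l2)) * (X - Z/2) * (Y - X/2)"
  using assms by algebra

theorem mainTheorem13:
  fixes l1 l2 :: real
    and \<pi> :: "(real \<times> real) measure"
    and \<nu>1 \<nu>2 :: "real measure"
    and f :: "complex \<Rightarrow> complex"
    and S :: "complex set"
  assumes l1: "l1 > 0" and l2: "l2 > 0"
    and pi_prob: "prob_space \<pi>" and pi_sets: "sets \<pi> = sets borel"
    and pi_supp: "emeasure \<pi> ({0<..} \<times> {0<..}) = 1"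
    and nu1_fin: "finite_measure \<nu>1" and nu1_sets: "sets \<nu>1 = sets borel"
    and nu1_supp: "emeasure \<nu>1 {..0} = 0"
    and nu2_fin: "finite_measure \<nu>2" and nu2_sets: "sets \<nu>2 = sets borel"
    and nu2_supp: "emeasure \<nu>2 {..0} = 0"
    and BAR: "\<And>x y. x \<ge> 0 \<Longrightarrow> y \<ge> 0 \<Longrightarrow>
       ((x - y)^2 + l1 * x + l2 * y) * laplace2 \<pi> x y
         = (x - y / 2) * laplace1 \<nu>1 y + (y - x / 2) * laplace1 \<nu>2 x"
    and S_open: "open S" and S_sup: "D2 l1 l2 \<union> P2 l1 l2 \<subseteq> S"
    and f_holo: "f holomorphic_on S"
    and f_ext: "\<And>y. y \<in> D2 l1 l2 \<Longrightarrow> Re y > 0 \<Longrightarrow> f y = claplace1 \<nu>1 y"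
  shows "\<forall>y \<in> P2 l1 l2. f (cnj y) / Dpoly1 l1 l2 (cnj y) = f y / Dpoly1 l1 l2 y"
proof -
  define H where "H = {y::complex. 0 < Re y}"
  have H_open: "open H" unfolding H_def by (rule open_halfspace_Re_gt)
  have H_conn: "connected H" unfolding H_def by (rule convex_connected[OF convex_halfspace_Re_gt])
  define L1 where "L1 = claplace1 \<nu>1"
  have mb1: "borel_measurable \<nu>1 = borel_measurable borel"
    by (rule measurable_cong_sets[OF nu1_sets refl])
  have mbpi: "borel_measurable \<pi> = borel_measurable borel"
    by (rule measurable_cong_sets[OF pi_sets refl])
  interpret pi: prob_space \<pi> by (rule pi_prob)
  have AEnu1: "AE u in \<nu>1. 0 < u"
  proof (rule AE_I'[of "{..0}"])
    show "{..0} \<in> null_sets \<nu>1" using nu1_supp nu1_sets by (intro null_setsI) auto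
  qed auto
  have AEpi: "AE p in \<pi>. p \<in> {0<..} \<times> {0<..}"
  proof (rule pi.AE_prob_1)
    show "measure \<pi> ({0<..} \<times> {0<..}) = 1" using pi_supp by (simp add: measure_def)
  qed
  have L1_holo: "L1 holomorphic_on H"
  proof -
    have "(\<lambda>y. \<integral>p. (\<lambda>_. 1) p * exp (- y * of_real ((\<lambda>u. u) p)) \<partial>\<nu>1) holomorphic_on {y. 0 < Re y}"
      by (rule laplace_holo[OF nu1_fin]) (use AEnu1 in \<open>auto simp: mb1 elim: AE_mp\<close>)
    thus ?thesis by (simp add: L1_def claplace1_def[abs_def] H_def)
  qed
  define L2 where "L2 = (\<lambda>x::real. \<lambda>y::complex. \<integral>p. exp (- of_real (x * fst p)) * exp (- y * of_real (snd p)) \<partial>\<pi>)"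
  have L2_holo: "L2 x holomorphic_on H" if x: "x \<ge> 0" for x
    unfolding L2_def H_def
  proof (rule laplace_holo[OF pi.finite_measure_axioms])
    show "(\<lambda>p. exp (- complex_of_real (x * fst p))) \<in> borel_measurable \<pi>" unfolding mbpi
      by (intro borel_measurable_continuous_onI continuous_intros)
    show "snd \<in> borel_measurable \<pi>" unfolding mbpi
      by (intro borel_measurable_continuous_onI continuous_intros)
    show "AE p in \<pi>. cmod (exp (- complex_of_real (x * fst p))) \<le> 1"
      using AEpi by eventually_elim (use x in \<open>auto simp: norm_exp_eq_Re\<close>)
    show "AE p in \<pi>. 0 \<le> snd p"
      using AEpi by eventually_elim auto
  qed
  have barc: "((of_real x - y)^2 + of_real l1 * of_real x + of_real l2 * y) * L2 x y
      = (of_real x - y / 2) * L1 y + (y - of_real x / 2) * of_real (laplace1 \<nu>2 x)"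
    if x: "x \<ge> 0" and y: "y \<in> H" for x y
  proof -
    define G where "G = (\<lambda>y. ((of_real x - y)^2 + of_real l1 * of_real x + of_real l2 * y) * L2 x y
      - ((of_real x - y / 2) * L1 y + (y - of_real x / 2) * of_real (laplace1 \<nu>2 x)))"
    have "G y = 0"
    proof (rule analytic_continuation[of G H "of_real ` {0<..}" 1])
      show "G holomorphic_on H" unfolding G_def
        by (intro holomorphic_intros L1_holo L2_holo x) auto
      show "of_real ` {0<..} \<subseteq> H" by (auto simp: H_def)
      show "1 \<in> H" by (simp add: H_def)
      show "1 islimpt complex_of_real ` {0<..}" using islimpt_ray[of 0 1] by simp
      show "G z = 0" if "z \<in> of_real ` {0<..}" for z
      proof -
        from that obtain t where t: "t > 0" "z = of_real t" by auto
        have e2: "L2 x (of_real t) = of_real (laplace2 \<pi> x t)"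
        proof -
          have "L2 x (of_real t) = (\<integral>p. of_real (exp (- x * fst p - t * snd p)) \<partial>\<pi>)"
            unfolding L2_def
            by (intro Bochner_Integration.integral_cong refl)
               (simp add: exp_of_real[symmetric] exp_add[symmetric] exp_diff[symmetric] algebra_simps,
                rule arg_cong[where f=exp], simp add: algebra_simps)
          thus ?thesis by (simp add: laplace2_def)
        qed
        have e1: "L1 (of_real t) = of_real (laplace1 \<nu>1 t)"
        proof -
          have "L1 (of_real t) = (\<integral>u. of_real (exp (- t * u)) \<partial>\<nu>1)"
            unfolding L1_def claplace1_def
            by (intro Bochner_Integration.integral_cong refl) (simp add: exp_of_real[symmetric])
          thus ?thesis by (simp add: laplace1_def)
        qed
        have "complex_of_real (((x - t)^2 + l1 * x + l2 * t) * laplace2 \<pi> x t)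
          = of_real ((x - t / 2) * laplace1 \<nu>1 t + (t - x / 2) * laplace1 \<nu>2 x)"
          using BAR[OF x] t by simp
        thus ?thesis unfolding G_def t e1 e2 by simp
      qed
    qed (use H_open H_conn y in auto)
    thus ?thesis unfolding G_def by simp
  qed
  have fP2: "f y = L1 y" if y: "y \<in> P2 l1 l2" "0 < Re y" for y
  proof -
    define g where "g = (\<lambda>z. f z - L1 z)"
    have yS: "y \<in> S" using y S_sup by auto
    have yH: "y \<in> H" using y by (simp add: H_def)
    have c1: "isCont f y"
      using holomorphic_on_imp_continuous_on[OF f_holo] continuous_on_eq_continuous_at[OF S_open] yS
      by blast
    have c2: "isCont L1 y"
      using holomorphic_on_imp_continuous_on[OF L1_holo] continuous_on_eq_continuous_at[OF H_open] yH
      by blast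
    have cg: "isCont g y" unfolding g_def using c1 c2 by (intro continuous_intros)
    have lim0: "((\<lambda>t::real. y + of_real t) \<longlongrightarrow> y) (at_right 0)"
    proof -
      have "((\<lambda>t::real. y + of_real t) \<longlongrightarrow> y + of_real 0) (at_right 0)"
        by (intro tendsto_intros)
      thus ?thesis by simp
    qed
    have lim: "((\<lambda>t. g (y + of_real t)) \<longlongrightarrow> g y) (at_right 0)"
      by (rule isCont_tendsto_compose[OF cg lim0])
    have ev: "eventually (\<lambda>t. g (y + of_real t) = 0) (at_right (0::real))"
    proof (rule eventually_at_rightI[of 0 1])
      fix t :: real assume t: "t \<in> {0<..<1}"
      have P: "(Im y)^2 = (l1 + l2) * Re y + l2 * (2 * l1 + l2) / 4"
        using y by (simp add: P2_def)
      have "(l1 + l2) * Re y < (l1 + l2) * (Re y + t)" using t l1 l2 by simp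
      hence D: "y + of_real t \<in> D2 l1 l2" using P by (simp add: D2_def)
      have "0 < Re (y + of_real t)" using t y by simp
      thus "g (y + of_real t) = 0" using f_ext[OF D] by (simp add: g_def L1_def)
    qed simp
    have "((\<lambda>t. g (y + of_real t)) \<longlongrightarrow> 0) (at_right 0)" by (rule tendsto_eventually[OF ev])
    from tendsto_unique[OF _ lim this] have "g y = 0" by simp
    thus ?thesis by (simp add: g_def)
  qed
  define a where "a = l1 + l2"
  have a: "a > 0" using l1 l2 by (simp add: a_def)
  define x0 where "x0 = l2^2 / (4*a)"
  define rr where "rr = (\<lambda>X::complex. csqrt (of_real (4*a) * X - of_real (l2^2)))"
  define Yp where "Yp = (\<lambda>X. X - of_real (l2/2) + \<i> * rr X / 2)"
  define Ym where "Ym = (\<lambda>X. X - of_real (l2/2) - \<i> * rr X / 2)"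
  define Om where "Om = {X::complex. x0 < Re X}"
  have rr_sq: "(rr X)^2 = of_real (4*a) * X - of_real (l2^2)" for X
    by (simp add: rr_def)
  have sumY: "Yp X + Ym X = 2*X - of_real l2" for X by (simp add: Yp_def Ym_def)
  have prodY: "Yp X * Ym X = X^2 + of_real l1 * X" for X
  proof -
    have "Yp X * Ym X = (X - of_real (l2/2))^2 + (rr X)^2/4"
      by (simp add: Yp_def Ym_def algebra_simps power2_eq_square)
    also have "\<dots> = X^2 + of_real l1 * X"
      unfolding rr_sq by (simp add: a_def field_simps power2_eq_square)
    finally show ?thesis .
  qed
  have x0pos: "l2^2 < 4*a*t" if "x0 < t" for t
    using that a by (simp add: x0_def pos_divide_less_eq mult.commute)
  have rr_real: "rr (of_real t) = of_real (sqrt (4*a*t - l2^2))" if "x0 < t" for t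
  proof -
    have "of_real (4*a) * of_real t - of_real (l2^2) = (of_real (4*a*t - l2^2) :: complex)" by simp
    thus ?thesis unfolding rr_def using x0pos[OF that] by (simp add: csqrt_of_real del: of_real_diff of_real_mult)
  qed
  have ReIm: "Re (Yp (of_real t)) = t - l2/2 \<and> Im (Yp (of_real t)) = sqrt (4*a*t - l2^2) / 2
      \<and> Re (Ym (of_real t)) = t - l2/2 \<and> Im (Ym (of_real t)) = - sqrt (4*a*t - l2^2) / 2"
    if "x0 < t" for t
    using rr_real[OF that] by (simp add: Yp_def Ym_def)
  have inP2: "Yp (of_real t) \<in> P2 l1 l2 \<and> Ym (of_real t) \<in> P2 l1 l2" if t: "x0 < t" for t
  proof -
    have sq: "(sqrt (4*a*t - l2^2))^2 = 4*a*t - l2^2" using x0pos[OF t] by simp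
    have "(sqrt (4*a*t - l2^2) / 2)^2 = (4*a*t - l2^2) / 4"
      by (simp only: power_divide sq) simp
    also have "\<dots> = (l1 + l2) * (t - l2/2) + l2 * (2 * l1 + l2) / 4"
      by (simp add: a_def field_simps power2_eq_square)
    finally have EQ: "(sqrt (4*a*t - l2^2) / 2)^2 = (l1 + l2) * (t - l2/2) + l2 * (2 * l1 + l2) / 4" .
    have h1: "Re (Yp (of_real t)) = t - l2/2" and h2: "Im (Yp (of_real t)) = sqrt (4*a*t - l2^2) / 2"
      and h3: "Re (Ym (of_real t)) = t - l2/2" and h4: "Im (Ym (of_real t)) = - (sqrt (4*a*t - l2^2) / 2)"
      using ReIm[OF t] by simp_all
    show ?thesis
      by (intro conjI; unfold P2_def mem_Collect_eq h1 h2 h3 h4 power2_minus; rule EQ)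
  qed
  have Om_open: "open Om" unfolding Om_def by (rule open_halfspace_Re_gt)
  have rr_holo: "rr holomorphic_on Om" unfolding rr_def
  proof (intro holomorphic_intros)
    fix X assume X: "X \<in> Om"
    have "l2^2 < 4*a*Re X" using x0pos[of "Re X"] X by (simp add: Om_def)
    hence "0 < Re (of_real (4*a) * X - of_real (l2^2))" by simp
    thus "of_real (4*a) * X - of_real (l2^2) \<notin> \<real>\<^sub>\<le>\<^sub>0"
      by (auto simp: complex_nonpos_Reals_iff)
  qed
  have Yp_holo: "Yp holomorphic_on Om" unfolding Yp_def by (intro holomorphic_intros rr_holo) auto
  have Ym_holo: "Ym holomorphic_on Om" unfolding Ym_def by (intro holomorphic_intros rr_holo) auto
  define V where "V = (Om \<inter> Yp -` S) \<inter> Ym -` S"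
  have V_open: "open V"
  proof -
    have o1: "open (Om \<inter> Yp -` S)"
      by (rule continuous_open_preimage[OF holomorphic_on_imp_continuous_on[OF Yp_holo] Om_open S_open])
    have "continuous_on (Om \<inter> Yp -` S) Ym"
      by (rule continuous_on_subset[OF holomorphic_on_imp_continuous_on[OF Ym_holo]]) auto
    thus ?thesis unfolding V_def by (rule continuous_open_preimage[OF _ o1 S_open])
  qed
  define G where "G = (\<lambda>X. f (Yp X) * Dpoly1 l1 l2 (Ym X) - f (Ym X) * Dpoly1 l1 l2 (Yp X))"
  have G_holo: "G holomorphic_on V"
  proof -
    have "(f \<circ> Yp) holomorphic_on V"
      by (rule holomorphic_on_compose_gen[OF holomorphic_on_subset[OF Yp_holo] f_holo]) (auto simp: V_def)
    moreover have "(f \<circ> Ym) holomorphic_on V"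
      by (rule holomorphic_on_compose_gen[OF holomorphic_on_subset[OF Ym_holo] f_holo]) (auto simp: V_def)
    moreover have "Yp holomorphic_on V" "Ym holomorphic_on V"
      by (auto intro: holomorphic_on_subset[OF Yp_holo] holomorphic_on_subset[OF Ym_holo] simp: V_def)
    ultimately show ?thesis unfolding G_def Dpoly1_def o_def
      by (intro holomorphic_intros)
  qed
  have x0l2: "x0 < l2/2"
  proof -
    have "l2^2 < 4*a*(l2/2)" using l1 l2 by (simp add: a_def power2_eq_square algebra_simps add_pos_pos mult_pos_pos)
    thus ?thesis using a by (simp add: x0_def pos_divide_less_eq mult_ac)
  qed
  have Gzero: "G (of_real x) = 0" if x: "l2/2 < x" for x
  proof -
    have xx0: "x0 < x" using x x0l2 by linarith
    define X where "X = (of_real x :: complex)"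
    define r where "r = sqrt (4*a*x - l2^2)"
    have r: "r > 0" using x0pos[OF xx0] by (simp add: r_def)
    define Y where "Y = Yp X"
    define Z where "Z = Ym X"
    have RI: "Re Y = x - l2/2" "Im Y = r/2" "Re Z = x - l2/2" "Im Z = - r/2"
      using ReIm[OF xx0] by (simp_all add: Y_def Z_def X_def r_def)
    have YP: "Y \<in> P2 l1 l2" and ZP: "Z \<in> P2 l1 l2" using inP2[OF xx0] by (simp_all add: Y_def Z_def X_def)
    have YH: "Y \<in> H" and ZH: "Z \<in> H" using RI x by (simp_all add: H_def)
    have s: "Y + Z = 2*X - of_real l2" and p: "Y * Z = X^2 + of_real l1 * X"
      using sumY prodY by (simp_all add: Y_def Z_def)
    have KY: "(X - Y)^2 + of_real l1 * X + of_real l2 * Y = 0" using s p by algebra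
    have KZ: "(X - Z)^2 + of_real l1 * X + of_real l2 * Z = 0" using s p by algebra
    define N where "N = complex_of_real (laplace1 \<nu>2 x)"
    have x0': "x \<ge> 0" using x l2 by linarith
    have e1: "(X - Y/2) * f Y + (Y - X/2) * N = 0"
      using barc[OF x0' YH] KY fP2[OF YP] RI x by (simp add: X_def N_def)
    have e2: "(X - Z/2) * f Z + (Z - X/2) * N = 0"
      using barc[OF x0' ZH] KZ fP2[OF ZP] RI x by (simp add: X_def N_def)
    have fe: "f Y * (X - Y/2) * (Z - X/2) = f Z * (X - Z/2) * (Y - X/2)" using e1 e2 by algebra
    have W: "Dpoly1 l1 l2 Y * (X - Y/2) * (Z - X/2) = Dpoly1 l1 l2 Z * (X - Z/2) * (Y - X/2)"
      using W_identity[OF s p] by (simp add: Dpoly1_def)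
    have "(f Y * Dpoly1 l1 l2 Z - f Z * Dpoly1 l1 l2 Y) * (Dpoly1 l1 l2 Y * (X - Y/2) * (Z - X/2)) = 0"
      using fe W by algebra
    moreover have "Dpoly1 l1 l2 Y \<noteq> 0" by (rule Dpoly1_nz[OF l1 l2 YP])
    moreover have "X - Y/2 \<noteq> 0"
    proof -
      have "Re (X - Y/2) > 0" using RI x l2 by (simp add: X_def)
      thus ?thesis by auto
    qed
    moreover have "Z - X/2 \<noteq> 0"
    proof -
      have "Im (Z - X/2) < 0" using RI r by (simp add: X_def)
      thus ?thesis by auto
    qed
    ultimately show ?thesis by (simp add: G_def Y_def Z_def X_def)
  qed
  define T where "T = (of_real ` {x0<..} :: complex set)"
  have TV: "T \<subseteq> V"
  proof
    fix X assume "X \<in> T"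
    then obtain t where t: "x0 < t" "X = of_real t" by (auto simp: T_def)
    thus "X \<in> V" using inP2[OF t(1)] S_sup by (auto simp: V_def Om_def)
  qed
  define \<xi> where "\<xi> = complex_of_real (l2/2 + 1)"
  have \<xi>T: "\<xi> \<in> T" unfolding T_def \<xi>_def using x0l2 by (intro imageI) simp
  define C where "C = connected_component_set V \<xi>"
  have TC: "T \<subseteq> C" unfolding C_def
  proof (rule connected_component_maximal[OF \<xi>T _ TV])
    show "connected T" unfolding T_def
      by (rule connected_continuous_image[OF _ connected_Ioi]) (intro continuous_intros)
  qed
  have GC: "G X = 0" if "X \<in> C" for X
  proof (rule analytic_continuation[of G C "of_real ` {l2/2<..}" \<xi>])
    show "G holomorphic_on C"
      by (rule holomorphic_on_subset[OF G_holo]) (auto simp: C_def connected_component_subset)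
    show "open C" unfolding C_def by (rule open_connected_component[OF V_open])
    show "connected C" unfolding C_def by simp
    show "of_real ` {l2/2<..} \<subseteq> C" using TC x0l2 by (auto simp: T_def)
    show "\<xi> \<in> C" using TC \<xi>T by auto
    show "\<xi> islimpt complex_of_real ` {l2/2<..}" unfolding \<xi>_def by (rule islimpt_ray) simp
    show "G z = 0" if "z \<in> complex_of_real ` {l2/2<..}" for z using that Gzero by auto
  qed (fact that)
  show ?thesis
  proof
    fix y assume y: "y \<in> P2 l1 l2"
    have P: "(Im y)^2 = (l1 + l2) * Re y + l2 * (2 * l1 + l2) / 4"
      using y by (simp add: P2_def)
    have cy: "cnj y \<in> P2 l1 l2" using P by (simp add: P2_def)
    have nz1: "Dpoly1 l1 l2 y \<noteq> 0" by (rule Dpoly1_nz[OF l1 l2 y])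
    have nz2: "Dpoly1 l1 l2 (cnj y) \<noteq> 0" by (rule Dpoly1_nz[OF l1 l2 cy])
    show "f (cnj y) / Dpoly1 l1 l2 (cnj y) = f y / Dpoly1 l1 l2 y"
    proof (cases "Im y = 0")
      case True
      hence "cnj y = y" by (simp add: complex_eq_iff)
      thus ?thesis by simp
    next
      case False
      define x where "x = Re y + l2/2"
      have q: "4*a*x - l2^2 = 4 * (Im y)^2"
        using P by (simp add: x_def a_def algebra_simps power2_eq_square)
      have "(Im y)^2 > 0" using False by simp
      hence "l2^2 < 4*a*x" using q by linarith
      hence xx0: "x0 < x" using a by (simp add: x0_def pos_divide_less_eq mult.commute)
      have sq: "sqrt (4*a*x - l2^2) = 2 * \<bar>Im y\<bar>"
        unfolding q by (simp add: real_sqrt_mult)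
      have "of_real x \<in> C" using TC xx0 by (auto simp: T_def)
      hence G0: "G (of_real x) = 0" by (rule GC)
      have R: "Re (Yp (of_real x)) = Re y" "Re (Ym (of_real x)) = Re y"
        "Im (Yp (of_real x)) = \<bar>Im y\<bar>" "Im (Ym (of_real x)) = - \<bar>Im y\<bar>"
        using ReIm[OF xx0] sq by (simp_all add: x_def)
      show ?thesis
      proof (cases "Im y > 0")
        case True
        hence "Yp (of_real x) = y" "Ym (of_real x) = cnj y" using R by (simp_all add: complex_eq_iff)
        hence "f y * Dpoly1 l1 l2 (cnj y) = f (cnj y) * Dpoly1 l1 l2 y"
          using G0 by (simp add: G_def)
        thus ?thesis using nz1 nz2 by (simp add: frac_eq_eq)
      next
        case False
        hence "Im y < 0" using \<open>Im y \<noteq> 0\<close> by simp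
        hence "Yp (of_real x) = cnj y" "Ym (of_real x) = y" using R by (simp_all add: complex_eq_iff)
        hence "f (cnj y) * Dpoly1 l1 l2 y = f y * Dpoly1 l1 l2 (cnj y)"
          using G0 by (simp add: G_def)
        thus ?thesis using nz1 nz2 by (simp add: frac_eq_eq)
      qed
    qed
  qed
qed

end
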